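(* Let $\rho_0=\sum_{n=1}^Np_n|n\rangle\langle n|$ be a density matrix on $\mathbb{C}^N$ ($N\ge2$) with eigenvalues in decreasing order $p_1\ge p_2\ge\dots\ge p_N$, and let $\gamma>0$. For Hermitian $G$ put $$QFI(\rho_0,G)=2\sum_{i\neq j}\frac{(p_i-p_j)^2}{p_i+p_j}|G_{ij}|^2,\qquad G_{ij}=\langle i|G|j\rangle,$$ where terms with $p_i+p_j=0$ are omitted. Then $$\max_{G=G^\dagger,\ \mathrm{Tr}[G^2]\le2\gamma^2}QFI(\rho_0,G)=4\gamma^2\frac{(p_1-p_N)^2}{p_1+p_N}.$$ The maximum is attained by a Hermitian $G$ with $|G_{1N}|=|G_{N1}|=\gamma$ and all other matrix elements (including diagonal ones) equal to $0$.
   Context: The expression $QFI(\rho_0,G)$ is the quantum Fisher information of the unitary family $\rho_\lambda=e^{-i\lambda G}\rho_0e^{i\lambda G}$ at $\lambda=0$. *)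

theory Defs
  imports Complex_Main "Jordan_Normal_Form.Matrix"
begin

text \<open>Eigenvalues p 0 >= ... >= p (N-1) (0-based indices) of the diagonal density matrix
  rho0 = sum_n p n |n><n| on C^N. Hermitian N x N matrices G are JNF matrices.\<close>

definition hermitian_mat :: "nat \<Rightarrow> complex mat \<Rightarrow> bool" where
  "hermitian_mat N G \<longleftrightarrow> G \<in> carrier_mat N N \<and>
     (\<forall>i<N. \<forall>j<N. G $$ (i,j) = cnj (G $$ (j,i)))"

definition mat_trace :: "complex mat \<Rightarrow> complex" where
  "mat_trace A = (\<Sum>i<dim_row A. A $$ (i,i))"

definition QFI :: "nat \<Rightarrow> (nat \<Rightarrow> real) \<Rightarrow> complex mat \<Rightarrow> real" where
  "QFI N p G = 2 * (\<Sum>i<N. \<Sum>j<N.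
      if i \<noteq> j \<and> p i + p j \<noteq> 0
      then (p i - p j)^2 / (p i + p j) * (cmod (G $$ (i,j)))^2 else 0)"

end

theory Submission
  imports Defs
begin

lemma two_sum:
  fixes h :: "nat \<Rightarrow> nat \<Rightarrow> 'a::comm_monoid_add"
  assumes "0 < m" "m < N"
    and "\<forall>i<N. \<forall>j<N. (i,j) \<noteq> (0,m) \<and> (i,j) \<noteq> (m,0) \<longrightarrow> h i j = 0"
  shows "(\<Sum>i<N. \<Sum>j<N. h i j) = h 0 m + h m 0"
proof -
  have inner: "(\<Sum>j<N. h i j) = (if i=0 then h 0 m else if i=m then h m 0 else 0)" if "i<N" for i
  proof -
    have "(\<Sum>j<N. h i j) = (\<Sum>j<N. (if j = m then (if i=0 then h 0 m else 0) else 0) + (if j=0 then (if i=m then h m 0 else 0) else 0))"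
      using assms that by (intro sum.cong) auto
    also have "\<dots> = (if i=0 then h 0 m else if i=m then h m 0 else 0)"
      using assms by (simp add: sum.distrib sum.delta)
    finally show ?thesis .
  qed
  have "(\<Sum>i<N. \<Sum>j<N. h i j) = (\<Sum>i<N. (if i=0 then h 0 m else 0) + (if i=m then h m 0 else 0))"
    using inner assms by (intro sum.cong) auto
  also have "\<dots> = h 0 m + h m 0"
    using assms by (simp add: sum.distrib sum.delta)
  finally show ?thesis .
qed

lemma trace_herm:
  assumes "hermitian_mat N G"
  shows "Re (mat_trace (G * G)) = (\<Sum>i<N. \<Sum>j<N. (cmod (G $$ (i,j)))^2)"
proof -
  have G: "G \<in> carrier_mat N N" using assms by (simp add: hermitian_mat_def)
  have "mat_trace (G * G) = (\<Sum>i<N. \<Sum>j<N. G $$ (i,j) * G $$ (j,i))"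
    using G by (simp add: mat_trace_def scalar_prod_def row_def col_def lessThan_atLeast0)
  also have "\<dots> = (\<Sum>i<N. \<Sum>j<N. complex_of_real ((cmod (G $$ (i,j)))^2))"
  proof (intro sum.cong refl)
    fix i j assume "i \<in> {..<N}" "j \<in> {..<N}"
    then have "G $$ (j,i) = cnj (G $$ (i,j))" using assms unfolding hermitian_mat_def by blast
    then show "G $$ (i,j) * G $$ (j,i) = complex_of_real ((cmod (G $$ (i,j)))^2)"
      by (metis complex_norm_square)
  qed
  finally show ?thesis by simp
qed

lemma f_mono:
  fixes a b A B :: real
  assumes "0 \<le> B" "B \<le> b" "b \<le> a" "a \<le> A" "0 < a + b"
  shows "(a-b)^2/(a+b) \<le> (A-B)^2/(A+B)"
proof -
  have 1: "(a-b)^2/(a+b) \<le> (A-b)^2/(A+b)"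
  proof -
    have "(a-b)^2*(A+b) \<le> (A-b)^2*(a+b)"
    proof -
      define x where "x = a - b" define X where "X = A - b"
      have "x \<ge> 0" "x \<le> X" "b \<ge> 0" using assms by (auto simp: x_def X_def)
      have "x^2 * X \<le> X^2 * x" using \<open>x\<ge>0\<close> \<open>x\<le>X\<close>
        by (simp add: power2_eq_square mult_left_mono mult.commute mult.left_commute mult_right_mono mult_nonneg_nonneg)
      moreover have "x^2 * (2*b) \<le> X^2 * (2*b)" using \<open>x\<ge>0\<close> \<open>x\<le>X\<close> \<open>b\<ge>0\<close>
        by (intro mult_right_mono power_mono) auto
      ultimately have "x^2*(X+2*b) \<le> X^2*(x+2*b)" by (simp add: algebra_simps)
      then show ?thesis by (simp add: x_def X_def algebra_simps)
    qed
    then show ?thesis using assms by (simp add: divide_simps)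
  qed
  have 2: "(A-b)^2/(A+b) \<le> (A-B)^2/(A+B)"
  proof (cases "A + B = 0")
    case True
    then have "A = 0" "B = 0" using assms by auto
    then show ?thesis using assms by auto
  next
    case False
    have "(A-b)^2*(A+B) \<le> (A-B)^2*(A+b)"
    proof -
      define y where "y = A - b" define Y where "Y = A - B"
      have "y \<ge> 0" "y \<le> Y" "B \<ge> 0" using assms by (auto simp: y_def Y_def)
      have "A + B = 2*A - Y" "A + b = 2*A - y" by (auto simp: y_def Y_def)
      have "y^2*(2*A - Y) \<le> Y^2*(2*A - y)"
      proof -
        have h: "0 \<le> y" "y \<le> Y" "Y \<le> A" using assms by (auto simp: y_def Y_def)
        have e: "Y^2*(2*A - y) - y^2*(2*A - Y) = (Y - y) * (2*A*(y+Y) - y*Y)"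
          by (simp add: algebra_simps power2_eq_square)
        have "y*Y \<le> Y*Y" using h by (intro mult_right_mono) auto
        also have "\<dots> \<le> (2*A)*Y" using h by (intro mult_right_mono) auto
        also have "\<dots> \<le> 2*A*(y+Y)" using h by (intro mult_left_mono) auto
        finally have "0 \<le> (Y - y) * (2*A*(y+Y) - y*Y)" using h by simp
        with e show ?thesis by linarith
      qed
      then show ?thesis using \<open>A + B = 2*A - Y\<close> \<open>A + b = 2*A - y\<close> by simp
    qed
    then show ?thesis using assms False by (simp add: divide_simps)
  qed
  from 1 2 show ?thesis by linarith
qed

theorem mainTheorem6:
  fixes N :: nat and p :: "nat \<Rightarrow> real" and \<gamma> :: real
  assumes "N \<ge> 2"
    and "\<And>n. n < N \<Longrightarrow> p n \<ge> 0"
    and "(\<Sum>n<N. p n) = 1"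
    and "\<And>i j. i \<le> j \<Longrightarrow> j < N \<Longrightarrow> p j \<le> p i"
    and "\<gamma> > 0"
  shows "(4 * \<gamma>^2 * (p 0 - p (N-1))^2 / (p 0 + p (N-1)))
             \<in> {QFI N p G | G. hermitian_mat N G \<and> Re (mat_trace (G * G)) \<le> 2 * \<gamma>^2}
         \<and> (\<forall>G. hermitian_mat N G \<and> Re (mat_trace (G * G)) \<le> 2 * \<gamma>^2 \<longrightarrow>
               QFI N p G \<le> 4 * \<gamma>^2 * (p 0 - p (N-1))^2 / (p 0 + p (N-1)))
         \<and> (\<forall>G. hermitian_mat N G \<and> cmod (G $$ (0, N-1)) = \<gamma> \<and> cmod (G $$ (N-1, 0)) = \<gamma>
           \<and> (\<forall>i<N. \<forall>j<N. (i,j) \<noteq> (0,N-1) \<and> (i,j) \<noteq> (N-1,0) \<longrightarrow> G $$ (i,j) = 0)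
           \<longrightarrow> Re (mat_trace (G * G)) \<le> 2 * \<gamma>^2
               \<and> QFI N p G = 4 * \<gamma>^2 * (p 0 - p (N-1))^2 / (p 0 + p (N-1)))
         \<and> (\<exists>G. hermitian_mat N G \<and> cmod (G $$ (0, N-1)) = \<gamma> \<and> cmod (G $$ (N-1, 0)) = \<gamma>
           \<and> (\<forall>i<N. \<forall>j<N. (i,j) \<noteq> (0,N-1) \<and> (i,j) \<noteq> (N-1,0) \<longrightarrow> G $$ (i,j) = 0))"
proof -
  define m where "m = N - 1"
  define M where "M = (p 0 - p m)^2 / (p 0 + p m)"
  have m: "0 < m" "m < N" using assms(1) by (auto simp: m_def)
  have p0pos: "p 0 > 0"
  proof (rule ccontr)
    assume "\<not> p 0 > 0"
    then have "\<forall>n<N. p n = 0" using assms(2,4) by (metis antisym le0 not_less)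
    then have "(\<Sum>n<N. p n) = 0" by simp
    with assms(3) show False by simp
  qed
  have pm: "p m \<ge> 0" using assms(2) m by auto
  have pos: "p 0 + p m > 0" using p0pos pm by simp
  have Mnn: "M \<ge> 0" unfolding M_def using pos by simp
  have rhs: "4 * \<gamma>^2 * (p 0 - p (N-1))^2 / (p 0 + p (N-1)) = 4 * \<gamma>^2 * M"
    by (simp add: M_def m_def)
  have fle: "(p i - p j)^2 / (p i + p j) \<le> M" if "i<N" "j<N" "p i + p j \<noteq> 0" for i j
  proof (cases "p j \<le> p i")
    case True
    have "p m \<le> p j" "p i \<le> p 0" using assms(4) that m by (auto simp: m_def)
    moreover have "p i + p j > 0" using that assms(2) by (metis add_nonneg_nonneg less_eq_real_def)
    ultimately show ?thesis unfolding M_def using True pm by (intro f_mono) auto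
  next
    case False
    have "p m \<le> p i" "p j \<le> p 0" using assms(4) that m by (auto simp: m_def)
    moreover have "p j + p i > 0" using that assms(2) by (metis add_nonneg_nonneg less_eq_real_def add.commute)
    ultimately have "(p j - p i)^2 / (p j + p i) \<le> M" unfolding M_def using False pm by (intro f_mono) auto
    then show ?thesis by (simp add: power2_commute add.commute)
  qed
  have upper: "QFI N p G \<le> 4 * \<gamma>^2 * M"
    if G: "hermitian_mat N G" "Re (mat_trace (G * G)) \<le> 2 * \<gamma>^2" for G
  proof -
    have "QFI N p G \<le> 2 * (\<Sum>i<N. \<Sum>j<N. M * (cmod (G $$ (i,j)))^2)"
      unfolding QFI_def
    proof (intro mult_left_mono sum_mono)
      fix i j assume ij: "i \<in> {..<N}" "j \<in> {..<N}"
      show "(if i \<noteq> j \<and> p i + p j \<noteq> 0 then (p i - p j)^2 / (p i + p j) * (cmod (G $$ (i,j)))^2 else 0)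
          \<le> M * (cmod (G $$ (i,j)))^2"
      proof (cases "i \<noteq> j \<and> p i + p j \<noteq> 0")
        case True
        then have le: "(p i - p j)^2 / (p i + p j) \<le> M" using ij fle by auto
        then show ?thesis using True mult_right_mono[OF le, of "(cmod (G $$ (i,j)))^2"] by simp
      qed (auto simp: Mnn)
    qed simp
    also have "\<dots> = 2 * M * Re (mat_trace (G * G))"
      by (simp add: trace_herm[OF G(1)] sum_distrib_left mult.assoc)
    also have "\<dots> \<le> 2 * M * (2 * \<gamma>^2)" using G(2) Mnn by (intro mult_left_mono) auto
    finally show ?thesis by (simp add: algebra_simps)
  qed
  have special: "Re (mat_trace (G * G)) \<le> 2 * \<gamma>^2 \<and> QFI N p G = 4 * \<gamma>^2 * M"
    if G: "hermitian_mat N G" "cmod (G $$ (0, m)) = \<gamma>" "cmod (G $$ (m, 0)) = \<gamma>"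
      "\<forall>i<N. \<forall>j<N. (i,j) \<noteq> (0,m) \<and> (i,j) \<noteq> (m,0) \<longrightarrow> G $$ (i,j) = 0" for G
  proof
    have "Re (mat_trace (G * G)) = (cmod (G $$ (0,m)))^2 + (cmod (G $$ (m,0)))^2"
      unfolding trace_herm[OF G(1)] using G(4) by (intro two_sum m) auto
    then show "Re (mat_trace (G * G)) \<le> 2 * \<gamma>^2" using G by simp
    have "QFI N p G = 2 * ((if 0 \<noteq> m \<and> p 0 + p m \<noteq> 0 then (p 0 - p m)^2 / (p 0 + p m) * (cmod (G $$ (0,m)))^2 else 0)
        + (if m \<noteq> 0 \<and> p m + p 0 \<noteq> 0 then (p m - p 0)^2 / (p m + p 0) * (cmod (G $$ (m,0)))^2 else 0))"
      unfolding QFI_def using G(4) by (subst two_sum[OF m]) auto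
    also have "\<dots> = 4 * \<gamma>^2 * M" using m pos G(2,3)
      by (simp add: M_def power2_commute add.commute)
    finally show "QFI N p G = 4 * \<gamma>^2 * M" .
  qed
  define G0 where "G0 = mat N N (\<lambda>(i,j). if (i,j) = (0,m) \<or> (i,j) = (m,0) then complex_of_real \<gamma> else 0)"
  have G0: "hermitian_mat N G0" "cmod (G0 $$ (0, m)) = \<gamma>" "cmod (G0 $$ (m, 0)) = \<gamma>"
      "\<forall>i<N. \<forall>j<N. (i,j) \<noteq> (0,m) \<and> (i,j) \<noteq> (m,0) \<longrightarrow> G0 $$ (i,j) = 0"
    using m assms(5) by (auto simp: G0_def hermitian_mat_def)
  have "4 * \<gamma>^2 * M \<in> {QFI N p G | G. hermitian_mat N G \<and> Re (mat_trace (G * G)) \<le> 2 * \<gamma>^2}"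
    using special[OF G0] G0(1) by force
  then show ?thesis unfolding rhs using upper special G0 by (auto simp: m_def)
qed

end
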